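(* Let $g(x_0,\dots,x_m)$ be a nonsingular $m$-stage FSR (characteristic function) and $f(x_0,\dots,x_m)=g(x_0,\dots,x_m)\oplus f_3(x_1,\dots,x_{m-1})$, where $f_3:\{0,1\}^{m-1}\to\{0,1\}$. Let $\lambda:\{0,1\}^m\to\{0,1\}$ satisfy: (a) $|\{v\in\Omega_m(c):\lambda(v)=1\}|\le1$ for every $c\in\Omega(g)$; (b) $\lambda(v)\cdot\lambda(v')=0$ for every $v\in\{0,1\}^m$; (c) for every $u\in\{0,1\}^{m-1}$ with $f_3(u)=1$ there is $b\in\{0,1\}$ with $\lambda(b\parallel u)=1$. Let $D$ be the directed graph with vertex set $\Omega(g)$ having an arc from $c_1$ to $c_2$ iff there exists $v\in\Omega_m(c_1)$ with $f_3(\mathrm{lbit}_{m-1}(v))=1$, $\lambda(v)=1$ and $v'\in\Omega_m(c_2)$. If $D$ is acyclic, then: (i) for every $d\in\Omega(f)$ there is a weakly connected component $\mathcal C$ of $D$ such that $\Omega_m(d)=\bigcup_{c\in\mathcal C}\Omega_m(c)$; (ii) if $h$ is a subFSR of $f$, then $\Omega(h)\subseteq\Omega(g)$.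
   Context: An $m$-stage FSR with feedback logic $f_1$ has characteristic function $f(x_0,\dots,x_m)=x_m\oplus f_1(x_0,\dots,x_{m-1})$, state transformation $F(x_0,\dots,x_{m-1})=(x_1,\dots,x_{m-1},f_1(x_0,\dots,x_{m-1}))$, and generates the sequences $s$ with $f(s(t),\dots,s(t+m))=0$ for all $t$; it is nonsingular if $F$ is bijective. A periodic sequence $s$ of least period $p$ determines the cycle $[s(0),\dots,s(p-1)]$ (shifts give the same cycle); $\Omega(f)$ is the set of cycles of sequences generated by $f$, and $\Omega_k(c)=\{(s(i),s((i+1)\bmod p),\dots,s((i+k-1)\bmod p)):0\le i<p\}$. For $v\in\{0,1\}^m$, $v'=v\oplus(1,0,\dots,0)$; $\mathrm{lbit}_{m-1}(v)$ is the vector of the last $m-1$ coordinates of $v$; $b\parallel u$ is concatenation. An $k$-stage FSR $h$ is a subFSR of the $m$-stage FSR $f$ if $k<m$ and every sequence generated by $h$ is generated by $f$. A weakly connected component of a directed graph is a connected component of the underlying undirected graph. *)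

theory Defs
  imports Main
begin

text \<open>Binary vectors in {0,1}^n are bool lists of length n (True = 1); xor is (\<noteq>).
  An m-stage FSR is given by its feedback logic f1 :: bool list \<Rightarrow> bool
  (meaningful on lists of length m).\<close>

definition char_fun :: "nat \<Rightarrow> (bool list \<Rightarrow> bool) \<Rightarrow> bool list \<Rightarrow> bool" where
  "char_fun m f1 xs = (xs ! m \<noteq> f1 (take m xs))"

definition state_trans :: "(bool list \<Rightarrow> bool) \<Rightarrow> bool list \<Rightarrow> bool list" where
  "state_trans f1 xs = tl xs @ [f1 xs]"

definition nonsingular :: "nat \<Rightarrow> (bool list \<Rightarrow> bool) \<Rightarrow> bool" where
  "nonsingular m f1 \<longleftrightarrow>
     bij_betw (state_trans f1) {xs. length xs = m} {xs. length xs = m}"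

definition generates :: "nat \<Rightarrow> (bool list \<Rightarrow> bool) \<Rightarrow> (nat \<Rightarrow> bool) \<Rightarrow> bool" where
  "generates m f1 s \<longleftrightarrow> (\<forall>t. char_fun m f1 (map s [t..<t+m+1]) = False)"

definition periodic_seq :: "(nat \<Rightarrow> bool) \<Rightarrow> bool" where
  "periodic_seq s \<longleftrightarrow> (\<exists>p>0. \<forall>t. s (t + p) = s t)"

definition cycle_of :: "(nat \<Rightarrow> bool) \<Rightarrow> (nat \<Rightarrow> bool) set" where
  "cycle_of s = {(\<lambda>t. s (t + i)) | i. True}"

definition Omega :: "nat \<Rightarrow> (bool list \<Rightarrow> bool) \<Rightarrow> (nat \<Rightarrow> bool) set set" where
  "Omega m f1 = {cycle_of s | s. generates m f1 s \<and> periodic_seq s}"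

definition Omega_k :: "nat \<Rightarrow> (nat \<Rightarrow> bool) set \<Rightarrow> bool list set" where
  "Omega_k k c = {map s [0..<k] | s. s \<in> c}"

definition flip_first :: "bool list \<Rightarrow> bool list" where
  "flip_first v = (\<not> hd v) # tl v"

definition lbit :: "nat \<Rightarrow> bool list \<Rightarrow> bool list" where
  "lbit k v = drop (length v - k) v"

definition subFSR :: "nat \<Rightarrow> (bool list \<Rightarrow> bool) \<Rightarrow> nat \<Rightarrow> (bool list \<Rightarrow> bool) \<Rightarrow> bool" where
  "subFSR k h m f1 \<longleftrightarrow> 0 < k \<and> k < m \<and> (\<forall>s. generates k h s \<longrightarrow> generates m f1 s)"

definition weak_components :: "'a set \<Rightarrow> ('a \<times> 'a) set \<Rightarrow> 'a set set" where
  "weak_components V A = {{y \<in> V. (x, y) \<in> (A \<union> A\<inverse>)\<^sup>*} | x. x \<in> V}"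

end

theory Submission
  imports Defs
begin


definition orb :: "('a \<Rightarrow> 'a) \<Rightarrow> 'a \<Rightarrow> 'a set" where
  "orb P x = range (\<lambda>i. (P ^^ i) x)"

lemma orb_iff: "y \<in> orb P x \<longleftrightarrow> (\<exists>i. y = (P ^^ i) x)"
  unfolding orb_def by auto

lemma orb_self: "x \<in> orb P x"
  unfolding orb_iff by (rule exI[of _ 0]) simp

lemma orb_step: "y \<in> orb P x \<Longrightarrow> P y \<in> orb P x"
proof -
  assume "y \<in> orb P x" then obtain i where "y = (P ^^ i) x" unfolding orb_iff by blast
  then have "P y = (P ^^ Suc i) x" by simp
  then show ?thesis unfolding orb_iff by blast
qed

lemma orb_trans: "y \<in> orb P x \<Longrightarrow> z \<in> orb P y \<Longrightarrow> z \<in> orb P x"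
proof -
  assume "y \<in> orb P x" "z \<in> orb P y"
  then obtain i j where "y = (P ^^ i) x" "z = (P ^^ j) y" unfolding orb_iff by blast
  then have "z = (P ^^ (j + i)) x" by (simp add: funpow_add)
  then show ?thesis unfolding orb_iff by blast
qed


lemma orb_induct:
  assumes "y \<in> orb P x" "Q x" "\<And>z. Q z \<Longrightarrow> Q (P z)"
  shows "Q y"
proof -
  have "\<And>i. Q ((P ^^ i) x)"
  proof -
    fix i show "Q ((P ^^ i) x)" by (induction i) (auto simp: assms(2,3))
  qed
  then show ?thesis using assms(1) unfolding orb_iff by auto
qed

lemma orb_subset: "y \<in> orb P x \<Longrightarrow> orb P y \<subseteq> orb P x"
  by (rule subsetI) (rule orb_trans)

locale permS =
  fixes S :: "'a set" and P :: "'a \<Rightarrow> 'a"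
  assumes finS: "finite S" and clS: "\<And>x. x \<in> S \<Longrightarrow> P x \<in> S" and injP: "inj_on P S"
begin

lemma pow_in: "x \<in> S \<Longrightarrow> (P ^^ i) x \<in> S"
  by (induction i) (auto simp: clS)

lemma orb_in: "x \<in> S \<Longrightarrow> orb P x \<subseteq> S"
  unfolding orb_def using pow_in by auto

lemma inj_pow: "inj_on (P ^^ i) S"
proof (induction i)
  case 0 then show ?case by simp
next
  case (Suc i)
  have "(P ^^ i) ` S \<subseteq> S" using pow_in by blast
  then have "inj_on P ((P ^^ i) ` S)" using injP inj_on_subset by blast
  then show ?case unfolding funpow.simps(2)
    by (rule comp_inj_on[OF Suc])
qed

lemma period: assumes "x \<in> S" shows "\<exists>n>0. (P ^^ n) x = x"
proof -
  have "range (\<lambda>i. (P ^^ i) x) \<subseteq> S" using pow_in assms by auto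
  then have "finite (range (\<lambda>i. (P ^^ i) x))" using finS finite_subset by blast
  then have "\<not> inj (\<lambda>i. (P ^^ i) x)" using finite_imageD infinite_UNIV_nat by blast
  then obtain i j where ij: "i \<noteq> j" "(P ^^ i) x = (P ^^ j) x" unfolding inj_def by blast
  have key: "\<exists>n>0. (P ^^ n) x = x" if "i < j" "(P ^^ i) x = (P ^^ j) x" for i j
  proof -
    have e: "(P ^^ (i + (j - i))) x = (P ^^ i) ((P ^^ (j - i)) x)"
      by (simp only: funpow_add o_apply)
    have "(P ^^ j) x = (P ^^ i) ((P ^^ (j - i)) x)"
      using that(1) e by simp
    then have "(P ^^ i) ((P ^^ (j - i)) x) = (P ^^ i) x" using that(2) by simp
    moreover have "(P ^^ (j - i)) x \<in> S" using pow_in assms by blast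
    ultimately have "(P ^^ (j - i)) x = x" using inj_pow[of i] assms
      unfolding inj_on_def by blast
    then show ?thesis using that(1) by (intro exI[of _ "j - i"]) auto
  qed
  show ?thesis
  proof (cases "i < j")
    case True then show ?thesis using key ij by blast
  next
    case False then have "j < i" using ij by simp
    then show ?thesis using key[of j i] ij by simp
  qed
qed

lemma pow_mult_fix: "(P ^^ n) x = x \<Longrightarrow> (P ^^ (n * k)) x = x"
  by (induction k) (auto simp: funpow_add)

lemma orb_sym: assumes "x \<in> S" "y \<in> orb P x" shows "x \<in> orb P y"
proof -
  obtain i where y: "y = (P ^^ i) x" using assms(2) unfolding orb_iff by auto
  obtain n where n: "n > 0" "(P ^^ n) x = x" using period assms(1) by blast
  have le: "n * i \<ge> i" using n by simp
  have "(P ^^ (n * i - i)) y = (P ^^ (n * i - i + i)) x"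
    by (simp add: y funpow_add)
  also have "\<dots> = (P ^^ (n * i)) x" using le by simp
  also have "\<dots> = x" using pow_mult_fix n by blast
  finally show ?thesis unfolding orb_iff by (intro exI[of _ "n * i - i"]) simp
qed

lemma orb_eq: assumes "x \<in> S" "y \<in> orb P x" shows "orb P y = orb P x"
proof
  show "orb P y \<subseteq> orb P x" by (rule orb_subset[OF assms(2)])
  show "orb P x \<subseteq> orb P y" by (rule orb_subset[OF orb_sym[OF assms]])
qed

lemma merge_L:
  assumes ab: "a \<in> S" "b \<in> S" "a \<notin> orb P b"
    and Qa: "Q a = P b" and Qz: "\<And>z. z \<in> S \<Longrightarrow> z \<noteq> a \<Longrightarrow> z \<noteq> b \<Longrightarrow> Q z = P z"
    and Zc: "\<And>z. z \<in> Z \<Longrightarrow> Q z \<in> Z" and aZ: "a \<in> Z"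
  shows "b \<in> Z"
proof (rule ccontr)
  assume bZ: "b \<notin> Z"
  have *: "(P ^^ i) (P b) \<in> Z" for i
  proof (induction i)
    case 0 then show ?case using Zc[OF aZ] Qa by simp
  next
    case (Suc i)
    let ?z = "(P ^^ i) (P b)"
    have "?z = (P ^^ Suc i) b" by (simp add: funpow_swap1)
    then have "?z \<in> orb P b" unfolding orb_iff by blast
    then have "?z \<noteq> a" using ab by auto
    moreover have "?z \<noteq> b" using Suc bZ by auto
    moreover have "?z \<in> S" using pow_in clS ab by blast
    ultimately have "Q ?z = P ?z" using Qz by blast
    then have "P ?z \<in> Z" using Zc[OF Suc] by simp
    then show ?case by simp
  qed
  obtain n where n: "n > 0" "(P ^^ n) b = b" using period ab by blast
  then have "(P ^^ Suc (n - 1)) b = b" by simp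
  then have "b = (P ^^ (n - 1)) (P b)" by (simp add: funpow_swap1)
  then show False using *[of "n - 1"] bZ by simp
qed

lemma merge:
  assumes ab: "a \<in> S" "b \<in> S" "b \<notin> orb P a"
    and Qdef: "\<And>z. z \<in> S \<Longrightarrow> Q z = P (if z = a then b else if z = b then a else z)"
  shows "b \<in> orb Q a" and "\<And>y. y \<in> S \<Longrightarrow> orb P y \<subseteq> orb Q y"
proof -
  have ab2: "a \<notin> orb P b" using orb_sym[OF ab(2)] ab(3) by blast
  have QS: "z \<in> S \<Longrightarrow> Q z \<in> S" for z using Qdef clS ab by auto
  have Qa: "Q a = P b" and Qb: "Q b = P a" using Qdef ab by auto
  have Qz: "z \<in> S \<Longrightarrow> z \<noteq> a \<Longrightarrow> z \<noteq> b \<Longrightarrow> Q z = P z" for z using Qdef by auto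
  have Qz': "z \<in> S \<Longrightarrow> z \<noteq> b \<Longrightarrow> z \<noteq> a \<Longrightarrow> Q z = P z" for z using Qdef by auto
  have main: "orb P y \<subseteq> orb Q y \<and> (a \<in> orb Q y \<inter> S \<longleftrightarrow> b \<in> orb Q y \<inter> S)" if yS: "y \<in> S" for y
  proof -
    let ?Z = "orb Q y \<inter> S"
    have Zc: "Q z \<in> ?Z" if "z \<in> ?Z" for z
    proof -
      have "Q z \<in> orb Q y" using orb_step[of z Q y] that by simp
      moreover have "Q z \<in> S" using QS that by simp
      ultimately show ?thesis by simp
    qed
    have ab_iff: "a \<in> ?Z \<longleftrightarrow> b \<in> ?Z"
    proof
      assume aZ: "a \<in> ?Z" show "b \<in> ?Z"
        by (rule merge_L[of a b Q ?Z, OF ab(1,2) ab2 Qa Qz Zc aZ])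
    next
      assume bZ: "b \<in> ?Z" show "a \<in> ?Z"
        by (rule merge_L[of b a Q ?Z, OF ab(2,1) ab(3) Qb Qz' Zc bZ])
    qed
    have aneb: "a \<noteq> b" using ab(3) orb_self[of a P] by auto
    have PZ: "P z \<in> ?Z" if zZ: "z \<in> ?Z" for z
    proof -
      let ?w = "(if z = a then b else if z = b then a else z)"
      have wZ: "?w \<in> ?Z"
      proof (cases "z = a")
        case True then show ?thesis using zZ ab_iff by simp
      next
        case False then show ?thesis using zZ ab_iff by (cases "z = b") simp_all
      qed
      then have "Q ?w \<in> ?Z" by (rule Zc)
      moreover have "Q ?w = P (if ?w = a then b else if ?w = b then a else ?w)"
        using Qdef wZ by blast
      moreover have "(if ?w = a then b else if ?w = b then a else ?w) = z"
        using aneb by (cases "z = a"; cases "z = b") simp_all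
      ultimately show ?thesis by simp
    qed
    have yZ: "y \<in> ?Z" using orb_self[of y Q] yS by simp
    have "z \<in> ?Z" if "z \<in> orb P y" for z
      using orb_induct[where Q="\<lambda>z. z \<in> ?Z", OF that yZ PZ] .
    then show ?thesis using ab_iff by blast
  qed
  show "\<And>y. y \<in> S \<Longrightarrow> orb P y \<subseteq> orb Q y" using main by blast
  have "a \<in> orb Q a \<inter> S" using orb_self[of a Q] ab by simp
  then show "b \<in> orb Q a" using main[OF ab(1)] by blast
qed

end


lemma forest:
  assumes ED: "E \<subseteq> D" and acyc: "acyclic D" and cp: "(c, p) \<in> D"
    and noout: "\<And>y. (c, y) \<notin> E"
    and func: "\<And>x y z. (x, y) \<in> E \<Longrightarrow> (x, z) \<in> E \<Longrightarrow> y = z"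
  shows "(c, p) \<notin> (E \<union> E\<inverse>)\<^sup>*"
proof
  assume cp': "(c, p) \<in> (E \<union> E\<inverse>)\<^sup>*"
  have "(y, c) \<in> E\<^sup>*" if "(c, y) \<in> (E \<union> E\<inverse>)\<^sup>*" for y
    using that
  proof (induction rule: rtrancl_induct)
    case base then show ?case by simp
  next
    case (step y z)
    show ?case
    proof (cases "(y, z) \<in> E")
      case True
      have "y \<noteq> c" using True noout by blast
      then obtain y2 where y2: "(y, y2) \<in> E" "(y2, c) \<in> E\<^sup>*"
        using step.IH by (metis converse_rtranclE)
      have "y2 = z" using func[OF y2(1) True] .
      then show ?thesis using y2(2) by simp
    next
      case False
      then have "(z, y) \<in> E" using step.hyps(2) by blast
      then show ?thesis using step.IH by (rule converse_rtrancl_into_rtrancl)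
    qed
  qed
  from this[OF cp'] have "(p, c) \<in> D\<^sup>*" using ED rtrancl_mono by blast
  then have "(c, c) \<in> D\<^sup>+" using cp by (rule rtrancl_into_trancl2[rotated])
  then show False using acyc unfolding acyclic_def by blast
qed

locale fsetup = permS S G for S :: "'a set" and G +
  fixes phi :: "'a \<Rightarrow> 'a" and T :: "'a set" and cl :: "'a \<Rightarrow> 'b" and D :: "('b \<times> 'b) set"
  assumes phiS: "\<And>y. y \<in> S \<Longrightarrow> phi y \<in> S"
    and phi2: "\<And>y. y \<in> S \<Longrightarrow> phi (phi y) = y"
    and phine: "\<And>y. y \<in> S \<Longrightarrow> phi y \<noteq> y"
    and TS: "T \<subseteq> S" and Tdisj: "\<And>v. v \<in> T \<Longrightarrow> phi v \<notin> T"
    and clG: "\<And>y. y \<in> S \<Longrightarrow> cl (G y) = cl y"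
    and TD: "\<And>v. v \<in> T \<Longrightarrow> (cl v, cl (phi v)) \<in> D"
    and acycD: "acyclic D"
    and Tfun: "\<And>v1 v2. v1 \<in> T \<Longrightarrow> v2 \<in> T \<Longrightarrow> cl v1 = cl v2 \<Longrightarrow> v1 = v2"
begin

definition tau :: "'a set \<Rightarrow> 'a \<Rightarrow> 'a" where
  "tau T0 y = (if y \<in> T0 \<or> phi y \<in> T0 then phi y else y)"

definition FT :: "'a set \<Rightarrow> 'a \<Rightarrow> 'a" where
  "FT T0 y = G (tau T0 y)"

definition EE :: "'a set \<Rightarrow> ('b \<times> 'b) set" where
  "EE T0 = {(cl v, cl (phi v)) | v. v \<in> T0}"

lemma tauS: "y \<in> S \<Longrightarrow> tau T0 y \<in> S"
  unfolding tau_def using phiS by auto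

lemma tau2: assumes "T0 \<subseteq> T" "y \<in> S" shows "tau T0 (tau T0 y) = y"
proof (cases "y \<in> T0")
  case True
  then have "phi y \<notin> T0" using Tdisj assms(1) by blast
  then show ?thesis using True phi2[OF assms(2)] unfolding tau_def by simp
next
  case False
  then show ?thesis using phi2[OF assms(2)] unfolding tau_def by simp
qed

lemma FT_perm: assumes "T0 \<subseteq> T" shows "permS S (FT T0)"
proof
  show "finite S" by (rule finS)
  show "FT T0 x \<in> S" if "x \<in> S" for x unfolding FT_def by (rule clS[OF tauS[OF that]])
  have "inj_on (tau T0) S"
    by (rule inj_on_inverseI[where g="tau T0"]) (rule tau2[OF assms])
  moreover have "tau T0 ` S \<subseteq> S" using tauS by (rule image_subsetI)
  then have "inj_on G (tau T0 ` S)" using injP by (rule inj_on_subset[rotated])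
  ultimately have "inj_on (G \<circ> tau T0) S" by (rule comp_inj_on)
  then show "inj_on (FT T0) S" unfolding FT_def comp_def by simp
qed

lemma easy_dir:
  assumes T0: "T0 \<subseteq> T" and yS: "y \<in> S" and z: "z \<in> orb (FT T0) y"
  shows "(cl y, cl z) \<in> (EE T0 \<union> (EE T0)\<inverse>)\<^sup>*"
proof -
  let ?R = "(EE T0 \<union> (EE T0)\<inverse>)\<^sup>*"
  have "(cl y, cl z) \<in> ?R \<and> z \<in> S"
  proof (rule orb_induct[where Q="\<lambda>z. (cl y, cl z) \<in> ?R \<and> z \<in> S", OF z])
    show "(cl y, cl y) \<in> ?R \<and> y \<in> S" using yS by simp
  next
    fix u assume u: "(cl y, cl u) \<in> ?R \<and> u \<in> S"
    have uS: "u \<in> S" using u by simp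
    have e: "cl (FT T0 u) = cl (tau T0 u)" unfolding FT_def using clG tauS uS by blast
    have step: "(cl u, cl (tau T0 u)) \<in> ?R"
    proof (cases "u \<in> T0")
      case True
      then have "(cl u, cl (phi u)) \<in> EE T0" unfolding EE_def by blast
      then have "(cl u, cl (phi u)) \<in> ?R" by (intro r_into_rtrancl) simp
      then show ?thesis using True by (simp add: tau_def)
    next
      case False
      show ?thesis
      proof (cases "phi u \<in> T0")
        case True
        then have "(cl (phi u), cl (phi (phi u))) \<in> EE T0" unfolding EE_def by blast
        then have "(cl (phi u), cl u) \<in> EE T0" using phi2[OF uS] by simp
        then have "(cl u, cl (phi u)) \<in> ?R" by (intro r_into_rtrancl) simp
        then show ?thesis using True by (simp add: tau_def)
      next
        case False
        then show ?thesis unfolding tau_def using \<open>u \<notin> T0\<close> by simp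
      qed
    qed
    have "(cl y, cl (FT T0 u)) \<in> ?R" using rtrancl_trans[OF conjunct1[OF u] step] e by simp
    moreover have "FT T0 u \<in> S" unfolding FT_def using tauS clS uS by blast
    ultimately show "(cl y, cl (FT T0 u)) \<in> ?R \<and> FT T0 u \<in> S" by simp
  qed
  then show ?thesis by simp
qed

lemma FT_insert:
  assumes "insert w T0 \<subseteq> T" "w \<notin> T0" "z \<in> S"
  shows "FT (insert w T0) z = FT T0 (if z = w then phi w else if z = phi w then w else z)"
proof -
  have wT: "w \<in> T" and wS: "w \<in> S" using assms TS by auto
  have pw: "phi w \<notin> T" using Tdisj wT by blast
  have pwT0: "phi w \<notin> T0" using pw assms(1) by blast
  have ppw: "phi (phi w) = w" using phi2 wS by blast
  have pwne: "phi w \<noteq> w" using phine wS by blast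
  have "tau (insert w T0) z = tau T0 (if z = w then phi w else if z = phi w then w else z)"
  proof (cases "z = w")
    case True then show ?thesis unfolding tau_def using pwT0 ppw assms(2) pwne by simp
  next
    case False
    show ?thesis
    proof (cases "z = phi w")
      case True then show ?thesis unfolding tau_def using pwT0 ppw assms(2) pwne False by simp
    next
      case False2: False
      have "phi z \<noteq> w"
      proof
        assume "phi z = w" then have "phi (phi z) = phi w" by simp
        then show False using False2 phi2[OF assms(3)] by simp
      qed
      then show ?thesis unfolding tau_def using False False2 by simp
    qed
  qed
  then show ?thesis unfolding FT_def by simp
qed

lemma crux: "finite T0 \<Longrightarrow> T0 \<subseteq> T \<Longrightarrow> \<forall>v\<in>T0. phi v \<in> orb (FT T0) v"
proof (induction T0 rule: finite_induct)
  case empty then show ?case by simp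
next
  case (insert w F0)
  have F0T: "F0 \<subseteq> T" using insert.prems by simp
  have wT: "w \<in> T" and wS: "w \<in> S" using insert.prems TS by auto
  have pwS: "phi w \<in> S" using phiS wS by blast
  interpret P: permS S "FT F0" by (rule FT_perm[OF F0T])
  have notin: "phi w \<notin> orb (FT F0) w"
  proof
    assume "phi w \<in> orb (FT F0) w"
    then have R: "(cl w, cl (phi w)) \<in> (EE F0 \<union> (EE F0)\<inverse>)\<^sup>*"
      using easy_dir[OF F0T wS] by blast
    have "(cl w, cl (phi w)) \<notin> (EE F0 \<union> (EE F0)\<inverse>)\<^sup>*"
    proof (rule forest[where D=D])
      show "EE F0 \<subseteq> D" unfolding EE_def using TD F0T by blast
      show "acyclic D" by (rule acycD)
      show "(cl w, cl (phi w)) \<in> D" using TD wT by blast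
      show "(cl w, y) \<notin> EE F0" for y
      proof
        assume "(cl w, y) \<in> EE F0"
        then obtain v where "v \<in> F0" "cl w = cl v" unfolding EE_def by blast
        then have "v = w" using Tfun F0T wT by blast
        then show False using \<open>v \<in> F0\<close> insert.hyps(2) by simp
      qed
      show "y = z" if xy: "(x, y) \<in> EE F0" and xz: "(x, z) \<in> EE F0" for x y z
      proof -
        obtain v1 where v1: "v1 \<in> F0" "x = cl v1" "y = cl (phi v1)" using xy unfolding EE_def by blast
        obtain v2 where v2: "v2 \<in> F0" "x = cl v2" "z = cl (phi v2)" using xz unfolding EE_def by blast
        have "v1 = v2" using Tfun F0T v1 v2 by blast
        then show ?thesis using v1 v2 by simp
      qed
    qed
    then show False using R by simp
  qed
  have Qdef: "\<And>z. z \<in> S \<Longrightarrow> FT (insert w F0) z = FT F0 (if z = w then phi w else if z = phi w then w else z)"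
    using FT_insert[OF insert.prems insert.hyps(2)] by blast
  have m1: "phi w \<in> orb (FT (insert w F0)) w"
    using P.merge(1)[OF wS pwS notin Qdef] .
  have m2: "orb (FT F0) y \<subseteq> orb (FT (insert w F0)) y" if "y \<in> S" for y
    using P.merge(2)[OF wS pwS notin Qdef that] .
  show ?case
  proof
    fix v assume v: "v \<in> insert w F0"
    show "phi v \<in> orb (FT (insert w F0)) v"
    proof (cases "v = w")
      case True then show ?thesis using m1 by simp
    next
      case False
      then have "v \<in> F0" using v by simp
      then have "phi v \<in> orb (FT F0) v" using insert.IH F0T by blast
      moreover have "v \<in> S" using \<open>v \<in> F0\<close> F0T TS by blast
      ultimately show ?thesis using m2 by blast
    qed
  qed
qed

end



definition win :: "nat \<Rightarrow> (nat \<Rightarrow> bool) \<Rightarrow> nat \<Rightarrow> bool list" where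
  "win m s t = map s [t..<t+m]"

lemma win_len[simp]: "length (win m s t) = m"
  unfolding win_def by simp

lemma win_nth: "i < m \<Longrightarrow> win m s t ! i = s (t + i)"
  unfolding win_def by simp

lemma gen_iff: "generates m f s \<longleftrightarrow> (\<forall>t. s (t + m) = f (win m s t))"
proof -
  have "char_fun m f (map s [t..<t+m+1]) = (s (t + m) \<noteq> f (win m s t))" for t
  proof -
    have "[t..<t+m+1] = [t..<t+m] @ [t+m]" by simp
    then have e: "map s [t..<t+m+1] = win m s t @ [s (t+m)]" unfolding win_def by simp
    show ?thesis unfolding char_fun_def e by (simp add: nth_append)
  qed
  then show ?thesis unfolding generates_def by auto
qed

lemma win_Suc: "0 < m \<Longrightarrow> win m s (Suc t) = tl (win m s t) @ [s (t + m)]"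
proof -
  assume m: "0 < m"
  have "[t..<t+m] = t # [Suc t..<t+m]" using m by (simp add: upt_conv_Cons)
  then have tl: "tl (win m s t) = map s [Suc t..<t+m]" unfolding win_def by simp
  have "[Suc t..<Suc t + m] = [Suc t..<t+m] @ [t+m]" using m by simp
  then show ?thesis unfolding win_def using tl by (simp add: win_def)
qed

lemma st_iff: "0 < m \<Longrightarrow> (win m s (Suc t) = state_trans f (win m s t)) \<longleftrightarrow> s (t + m) = f (win m s t)"
  unfolding state_trans_def by (simp add: win_Suc)

lemma gen_iff2: "0 < m \<Longrightarrow> generates m f s \<longleftrightarrow> (\<forall>t. win m s (Suc t) = state_trans f (win m s t))"
  using gen_iff st_iff by metis

lemma gen_pow: "0 < m \<Longrightarrow> generates m f s \<Longrightarrow> win m s i = (state_trans f ^^ i) (win m s 0)"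
proof (induction i)
  case 0 then show ?case by simp
next
  case (Suc i) then show ?case using gen_iff2 by (metis comp_apply funpow.simps(2))
qed

lemma Omega_k_cycle: "Omega_k m (cycle_of s) = range (win m s)"
proof -
  have e: "map (\<lambda>t. s (t + i)) [0..<m] = win m s i" for i
    by (rule nth_equalityI) (simp_all add: win_nth add.commute)
  show ?thesis
  proof (rule set_eqI)
    fix v
    show "v \<in> Omega_k m (cycle_of s) \<longleftrightarrow> v \<in> range (win m s)"
    proof
      assume "v \<in> Omega_k m (cycle_of s)"
      then obtain i where "v = map (\<lambda>t. s (t + i)) [0..<m]"
        unfolding Omega_k_def cycle_of_def by blast
      then show "v \<in> range (win m s)" using e by simp
    next
      assume "v \<in> range (win m s)"
      then obtain i where "v = win m s i" by blast
      then have "v = map (\<lambda>t. s (t + i)) [0..<m]" using e by simp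
      then show "v \<in> Omega_k m (cycle_of s)" unfolding Omega_k_def cycle_of_def by blast
    qed
  qed
qed

lemma st_len: "0 < m \<Longrightarrow> length y = m \<Longrightarrow> length (state_trans f y) = m"
  unfolding state_trans_def by simp

lemma st_pow_len: "0 < m \<Longrightarrow> length y = m \<Longrightarrow> length ((state_trans f ^^ j) y) = m"
  by (induction j) (simp_all add: st_len)

lemma st_pow_nth: "length y = m \<Longrightarrow> i + j < m \<Longrightarrow> ((state_trans f ^^ j) y) ! i = y ! (i + j)"
proof (induction j arbitrary: y)
  case 0 then show ?case by simp
next
  case (Suc j)
  have m: "0 < m" using Suc.prems by simp
  have "((state_trans f ^^ Suc j) y) ! i = ((state_trans f ^^ j) (state_trans f y)) ! i"
    by (simp add: funpow_swap1)
  also have "\<dots> = (state_trans f y) ! (i + j)"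
    using Suc.IH[of "state_trans f y"] Suc.prems st_len[OF m] by simp
  also have "\<dots> = y ! (i + Suc j)"
  proof -
    have "i + j < length (tl y)" using Suc.prems by simp
    then show ?thesis unfolding state_trans_def by (simp add: nth_append nth_tl)
  qed
  finally show ?case .
qed

lemma exists_seq:
  assumes m: "0 < m" and pS: "permS {xs. length xs = m} (state_trans f)" and x: "length x = m"
  shows "\<exists>s. generates m f s \<and> periodic_seq s \<and> win m s 0 = x"
proof -
  interpret permS "{xs. length xs = m}" "state_trans f" by (rule pS)
  let ?ST = "state_trans f"
  define s where "s t = hd ((?ST ^^ t) x)" for t
  have w: "win m s t = (?ST ^^ t) x" for t
  proof (rule nth_equalityI)
    show "length (win m s t) = length ((?ST ^^ t) x)" using st_pow_len[OF m x] by simp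
    fix i assume "i < length (win m s t)"
    then have i: "i < m" by simp
    have "win m s t ! i = hd ((?ST ^^ (i + t)) x)" unfolding s_def win_nth[OF i] by (simp add: add.commute)
    also have "\<dots> = ((?ST ^^ i) ((?ST ^^ t) x)) ! 0"
    proof -
      have "length ((?ST ^^ i) ((?ST ^^ t) x)) = m" using st_pow_len[OF m st_pow_len[OF m x]] .
      then have "(?ST ^^ i) ((?ST ^^ t) x) \<noteq> []" using m by auto
      then show ?thesis by (simp add: funpow_add hd_conv_nth)
    qed
    also have "\<dots> = ((?ST ^^ t) x) ! i"
      using st_pow_nth[OF st_pow_len[OF m x], of 0 i] i by simp
    finally show "win m s t ! i = (?ST ^^ t) x ! i" .
  qed
  have gen: "generates m f s" unfolding gen_iff2[OF m] w by simp
  obtain n where n: "n > 0" "(?ST ^^ n) x = x" using period x by blast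
  have "s (t + n) = s t" for t unfolding s_def by (simp add: funpow_add n(2))
  then have "periodic_seq s" unfolding periodic_seq_def using n(1) by blast
  moreover have "win m s 0 = x" using w[of 0] by simp
  ultimately show ?thesis using gen by blast
qed

lemma hd_win: "0 < m \<Longrightarrow> hd (win m s t) = s t"
  unfolding win_def by (simp add: upt_conv_Cons)

lemma cycle_sub:
  assumes m: "0 < m" and g1: "generates m f s1" and g2: "generates m f s2"
    and w: "win m s1 0 = win m s2 j"
  shows "cycle_of s1 \<subseteq> cycle_of s2"
proof -
  have ww: "win m s1 t = win m s2 (t + j)" for t
  proof (induction t)
    case 0 then show ?case using w by simp
  next
    case (Suc t)
    then show ?case using gen_iff2[OF m] g1 g2 by (metis add_Suc)
  qed
  have "s1 t = s2 (t + j)" for t using hd_win[OF m, of s1 t] hd_win[OF m, of s2 "t + j"] ww by simp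
  then have "(\<lambda>t. s1 (t + i)) = (\<lambda>t. s2 (t + (i + j)))" for i by (simp add: add.assoc)
  then show ?thesis unfolding cycle_of_def by blast
qed



lemma flip_len: "length (flip_first y) = length y" if "y \<noteq> []"
  using that unfolding flip_first_def by simp

lemma flip_tl[simp]: "tl (flip_first y) = tl y"
  unfolding flip_first_def by simp

lemma flip2: "y \<noteq> [] \<Longrightarrow> flip_first (flip_first y) = y"
  unfolding flip_first_def by simp

lemma flip_ne: "y \<noteq> [] \<Longrightarrow> flip_first y \<noteq> y"
  unfolding flip_first_def by (cases y) auto

lemma lbit_tl: "length y = m \<Longrightarrow> lbit (m - 1) y = tl y"
  unfolding lbit_def by (cases y) auto

lemma drop_flip: "0 < n \<Longrightarrow> drop n (flip_first y) = drop n y"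
  unfolding flip_first_def by (cases y) (auto simp: drop_Cons')

context
  fixes m :: nat and g1 f1 f3 lam :: "bool list \<Rightarrow> bool" and D
  assumes m_pos: "0 < m"
    and g_ns: "nonsingular m g1"
    and f_def: "\<forall>xs. length xs = m + 1 \<longrightarrow>
                  char_fun m f1 xs = (char_fun m g1 xs \<noteq> f3 (take (m - 1) (drop 1 xs)))"
    and cond_a: "\<forall>c \<in> Omega m g1. card {v \<in> Omega_k m c. lam v} \<le> 1"
    and cond_b: "\<forall>v. length v = m \<longrightarrow> \<not> (lam v \<and> lam (flip_first v))"
    and cond_c: "\<forall>u. length u = m - 1 \<and> f3 u \<longrightarrow> (\<exists>b. lam (b # u))"
    and D_def: "D = {(c1, c2). c1 \<in> Omega m g1 \<and> c2 \<in> Omega m g1 \<and>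
                   (\<exists>v \<in> Omega_k m c1. f3 (lbit (m - 1) v) \<and> lam v \<and>
                        flip_first v \<in> Omega_k m c2)}"
    and acyc: "acyclic D"
begin

lemma ne: "length y = m \<Longrightarrow> y \<noteq> []"
  using m_pos by auto

lemma G_perm: "permS {xs. length xs = m} (state_trans g1)"
proof
  show "finite {xs :: bool list. length xs = m}" using finite_lists_length_eq[of "UNIV::bool set" m] by simp
  show "state_trans g1 x \<in> {xs. length xs = m}" if "x \<in> {xs. length xs = m}" for x
    using st_len[OF m_pos] that by simp
  show "inj_on (state_trans g1) {xs. length xs = m}"
    using g_ns unfolding nonsingular_def by (rule bij_betw_imp_inj_on)
qed

lemma g_flip: assumes "length y = m" shows "g1 (flip_first y) = (\<not> g1 y)"
proof (rule ccontr)
  assume "g1 (flip_first y) \<noteq> (\<not> g1 y)"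
  then have "g1 (flip_first y) = g1 y" by simp
  then have "state_trans g1 (flip_first y) = state_trans g1 y" unfolding state_trans_def by simp
  moreover have "length (flip_first y) = m" using flip_len[OF ne[OF assms]] assms by simp
  ultimately have "flip_first y = y"
    using G_perm assms unfolding permS_def inj_on_def by blast
  then show False using flip_ne[OF ne[OF assms]] by simp
qed

lemma f1_eq: assumes "length y = m" shows "f1 y = (g1 y \<noteq> f3 (lbit (m - 1) y))"
proof -
  have "length (y @ [False]) = m + 1" using assms by simp
  then have "char_fun m f1 (y @ [False]) = (char_fun m g1 (y @ [False]) \<noteq> f3 (take (m - 1) (drop 1 (y @ [False]))))"
    using f_def by blast
  moreover have "take (m - 1) (drop 1 (y @ [False])) = lbit (m - 1) y"
    using assms m_pos unfolding lbit_def by simp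
  ultimately show ?thesis unfolding char_fun_def using assms by (simp add: nth_append)
qed

lemma cyc_repr: assumes "c \<in> Omega m g1"
  obtains s where "c = cycle_of s" "generates m g1 s" "Omega_k m c = orb (state_trans g1) (win m s 0)"
proof -
  obtain s where s: "c = cycle_of s" "generates m g1 s" using assms unfolding Omega_def by auto
  have "Omega_k m c = range (win m s)" using s(1) Omega_k_cycle by simp
  also have "\<dots> = orb (state_trans g1) (win m s 0)"
  proof -
    have "win m s = (\<lambda>i. (state_trans g1 ^^ i) (win m s 0))"
      by (rule ext) (rule gen_pow[OF m_pos s(2)])
    then show ?thesis unfolding orb_def by (rule arg_cong)
  qed
  finally have e: "Omega_k m c = orb (state_trans g1) (win m s 0)" .
  show ?thesis by (rule that[OF s(1) s(2) e])
qed

lemma cyc_S: "c \<in> Omega m g1 \<Longrightarrow> v \<in> Omega_k m c \<Longrightarrow> length v = m"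
  unfolding Omega_k_def by auto

lemma cyc_orb: assumes "c \<in> Omega m g1" "v \<in> Omega_k m c"
  shows "Omega_k m c = orb (state_trans g1) v"
proof -
  interpret permS "{xs. length xs = m}" "state_trans g1" by (rule G_perm)
  obtain s where s: "c = cycle_of s" "generates m g1 s" "Omega_k m c = orb (state_trans g1) (win m s 0)"
    using cyc_repr[OF assms(1)] by blast
  have "orb (state_trans g1) v = orb (state_trans g1) (win m s 0)"
    by (rule orb_eq) (use s assms in auto)
  then show ?thesis using s by simp
qed

lemma cyc_uniq: assumes "c1 \<in> Omega m g1" "c2 \<in> Omega m g1" "v \<in> Omega_k m c1" "v \<in> Omega_k m c2"
  shows "c1 = c2"
proof -
  have eq: "Omega_k m c1 = Omega_k m c2" using cyc_orb[OF assms(1,3)] cyc_orb[OF assms(2,4)] by simp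
  have sub: "c1 \<subseteq> c2" if h1: "c1 \<in> Omega m g1" and h2: "c2 \<in> Omega m g1" and h3: "Omega_k m c1 = Omega_k m c2" for c1 c2
  proof -
    obtain s1 where s1: "c1 = cycle_of s1" "generates m g1 s1" using h1 unfolding Omega_def by blast
    obtain s2 where s2: "c2 = cycle_of s2" "generates m g1 s2" using h2 unfolding Omega_def by blast
    have "win m s1 0 \<in> Omega_k m c1" using s1 Omega_k_cycle by simp
    then have "win m s1 0 \<in> range (win m s2)" using s2 Omega_k_cycle h3 by simp
    then obtain j where "win m s1 0 = win m s2 j" by blast
    then show ?thesis using cycle_sub[OF m_pos s1(2) s2(2)] s1 s2 by simp
  qed
  show ?thesis using sub[OF assms(1,2) eq] sub[OF assms(2,1) eq[symmetric]] by blast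
qed

lemma cyc_ex: assumes "length v = m" shows "\<exists>c. c \<in> Omega m g1 \<and> v \<in> Omega_k m c"
proof -
  obtain s where s: "generates m g1 s" "periodic_seq s" "win m s 0 = v"
    using exists_seq[OF m_pos G_perm assms] by blast
  have "cycle_of s \<in> Omega m g1" unfolding Omega_def using s by blast
  moreover have "win m s 0 \<in> range (win m s)" by (rule rangeI)
  then have "v \<in> Omega_k m (cycle_of s)" using s(3) Omega_k_cycle by simp
  ultimately show ?thesis by blast
qed

definition cl :: "bool list \<Rightarrow> (nat \<Rightarrow> bool) set" where
  "cl v = (SOME c. c \<in> Omega m g1 \<and> v \<in> Omega_k m c)"

lemma cl_prop: assumes "length v = m" shows "cl v \<in> Omega m g1" "v \<in> Omega_k m (cl v)"
  using someI_ex[OF cyc_ex[OF assms]] unfolding cl_def by blast+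

lemma cl_eq: assumes "c \<in> Omega m g1" "v \<in> Omega_k m c" shows "cl v = c"
proof -
  have l: "length v = m" by (rule cyc_S[OF assms])
  show ?thesis by (rule cyc_uniq[OF cl_prop(1)[OF l] assms(1) cl_prop(2)[OF l] assms(2)])
qed

definition TT :: "bool list set" where
  "TT = {v. length v = m \<and> lam v \<and> f3 (lbit (m - 1) v)}"

lemma fsetup_inst: "fsetup {xs. length xs = m} (state_trans g1) flip_first TT cl D"
proof -
  interpret permS "{xs. length xs = m}" "state_trans g1" by (rule G_perm)
  show ?thesis
  proof (unfold_locales)
    fix y :: "bool list" assume y: "y \<in> {xs. length xs = m}"
    then have yl: "length y = m" by simp
    show "flip_first y \<in> {xs. length xs = m}" using flip_len[OF ne[OF yl]] yl by simp
    show "flip_first (flip_first y) = y" using flip2[OF ne[OF yl]] by simp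
    show "flip_first y \<noteq> y" using flip_ne[OF ne[OF yl]] by simp
    have "state_trans g1 y \<in> orb (state_trans g1) y" by (rule orb_step[OF orb_self])
    then have "state_trans g1 y \<in> Omega_k m (cl y)" using cyc_orb[OF cl_prop[OF yl]] by simp
    then show "cl (state_trans g1 y) = cl y" by (rule cl_eq[OF cl_prop(1)[OF yl]])
  next
    show "TT \<subseteq> {xs. length xs = m}" unfolding TT_def by blast
  next
    fix v assume "v \<in> TT"
    then show "flip_first v \<notin> TT" unfolding TT_def using cond_b by blast
  next
    fix v assume v: "v \<in> TT"
    then have vl: "length v = m" unfolding TT_def by simp
    have fl: "length (flip_first v) = m" using flip_len[OF ne[OF vl]] vl by simp
    show "(cl v, cl (flip_first v)) \<in> D" unfolding D_def using v cl_prop[OF vl] cl_prop[OF fl]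
      unfolding TT_def by blast
  next
    show "acyclic D" by (rule acyc)
  next
    fix v1 v2 assume v: "v1 \<in> TT" "v2 \<in> TT" "cl v1 = cl v2"
    have l: "length v1 = m" "length v2 = m" using v unfolding TT_def by auto
    let ?c = "cl v1"
    have c: "?c \<in> Omega m g1" using cl_prop l by blast
    have in1: "v1 \<in> {v \<in> Omega_k m ?c. lam v}" using cl_prop(2)[OF l(1)] v unfolding TT_def by blast
    have in2: "v2 \<in> {v \<in> Omega_k m ?c. lam v}" using cl_prop(2)[OF l(2)] v unfolding TT_def by simp
    have fin: "finite {v \<in> Omega_k m ?c. lam v}"
    proof (rule finite_subset)
      show "{v \<in> Omega_k m ?c. lam v} \<subseteq> {xs. length xs = m}" using cyc_S[OF c] by blast
      show "finite {xs :: bool list. length xs = m}" by (rule finS)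
    qed
    have "card {v \<in> Omega_k m ?c. lam v} \<le> 1" using cond_a c by blast
    then show "v1 = v2" using card_le_Suc0_iff_eq[OF fin] in1 in2 by simp
  qed
qed


lemma drop_win: "n \<le> m \<Longrightarrow> drop n (win m s t) = win (m - n) s (t + n)"
  unfolding win_def by (simp add: drop_map)

lemma main: "(\<forall>d \<in> Omega m f1. \<exists>C \<in> weak_components (Omega m g1) D.
            Omega_k m d = (\<Union>c \<in> C. Omega_k m c))
       \<and> (\<forall>k h. subFSR k h m f1 \<longrightarrow> Omega k h \<subseteq> Omega m g1)"
proof -
  interpret fs: fsetup "{xs. length xs = m}" "state_trans g1" flip_first TT cl D by (rule fsetup_inst)
  interpret P: permS "{xs. length xs = m}" "fs.FT TT" by (rule fs.FT_perm) simp
  let ?S = "{xs :: bool list. length xs = m}"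
  let ?G = "state_trans g1"
  let ?F = "fs.FT TT"
  have finT: "finite TT" by (rule finite_subset[OF fs.TS fs.finS])
  have crux: "\<forall>v\<in>TT. flip_first v \<in> orb ?F v" using fs.crux[OF finT] by simp
  have lbf: "lbit (m - 1) (flip_first y) = lbit (m - 1) y" if "length y = m" for y
  proof -
    have fl: "length (flip_first y) = m" using flip_len[OF ne[OF that]] that by simp
    show ?thesis using lbit_tl[OF fl] lbit_tl[OF that] by simp
  qed
  have Tiff: "(y \<in> TT \<or> flip_first y \<in> TT) \<longleftrightarrow> f3 (lbit (m - 1) y)" if yl: "length y = m" for y
  proof
    assume "y \<in> TT \<or> flip_first y \<in> TT"
    then show "f3 (lbit (m - 1) y)" unfolding TT_def using lbf[OF yl] by auto
  next
    assume f: "f3 (lbit (m - 1) y)"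
    have fl: "length (flip_first y) = m" using flip_len[OF ne[OF yl]] yl by simp
    have "length (tl y) = m - 1" using yl by simp
    moreover have "f3 (tl y)" using f lbit_tl[OF yl] by simp
    ultimately obtain b where b: "lam (b # tl y)" using cond_c by blast
    show "y \<in> TT \<or> flip_first y \<in> TT"
    proof (cases "b = hd y")
      case True
      then have "b # tl y = y" using ne[OF yl] by simp
      then show ?thesis using b f yl unfolding TT_def by auto
    next
      case False
      then have "b # tl y = flip_first y" unfolding flip_first_def by simp
      then have "lam (flip_first y)" using b by simp
      then show ?thesis using f fl lbf[OF yl] unfolding TT_def by auto
    qed
  qed
  have FF: "state_trans f1 y = ?F y" if yl: "length y = m" for y
  proof (cases "f3 (lbit (m - 1) y)")
    case True
    then have "fs.tau TT y = flip_first y" unfolding fs.tau_def using Tiff[OF yl] by simp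
    then have "?F y = tl y @ [\<not> g1 y]" unfolding fs.FT_def state_trans_def using g_flip[OF yl] by simp
    moreover have "f1 y = (\<not> g1 y)" using f1_eq[OF yl] True by simp
    ultimately show ?thesis unfolding state_trans_def by simp
  next
    case False
    then have "fs.tau TT y = y" unfolding fs.tau_def using Tiff[OF yl] by simp
    then have "?F y = tl y @ [g1 y]" unfolding fs.FT_def state_trans_def by simp
    moreover have "f1 y = g1 y" using f1_eq[OF yl] False by simp
    ultimately show ?thesis unfolding state_trans_def by simp
  qed
  have tauO: "flip_first y \<in> orb ?F y" if yl: "length y = m" and yT: "y \<in> TT \<or> flip_first y \<in> TT" for y
  proof (cases "y \<in> TT")
    case True then show ?thesis using crux by blast
  next
    case False
    then have "flip_first y \<in> TT" using yT by simp
    then have "flip_first (flip_first y) \<in> orb ?F (flip_first y)" using crux by blast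
    then have "y \<in> orb ?F (flip_first y)" using flip2[OF ne[OF yl]] by simp
    moreover have "flip_first y \<in> ?S" using flip_len[OF ne[OF yl]] yl by simp
    ultimately show ?thesis using P.orb_sym by blast
  qed
  have winF: "win m s i = (?F ^^ i) (win m s 0)" if g: "generates m f1 s" for s i
  proof (induction i)
    case 0 then show ?case by simp
  next
    case (Suc i)
    have "win m s (Suc i) = state_trans f1 (win m s i)" using gen_iff2[OF m_pos] g by blast
    also have "\<dots> = ?F (win m s i)" using FF win_len by blast
    finally show ?case using Suc by simp
  qed
  have OkF: "Omega_k m (cycle_of s) = orb ?F (win m s 0)" if g: "generates m f1 s" for s
  proof -
    have "win m s = (\<lambda>i. (?F ^^ i) (win m s 0))" by (rule ext) (rule winF[OF g])
    then have "range (win m s) = orb ?F (win m s 0)" unfolding orb_def by (rule arg_cong)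
    then show ?thesis using Omega_k_cycle by simp
  qed
  have EED: "fs.EE TT \<subseteq> D" unfolding fs.EE_def using fs.TD by blast
  have part1: "\<exists>C \<in> weak_components (Omega m g1) D. Omega_k m d = (\<Union>c \<in> C. Omega_k m c)"
    if d: "d \<in> Omega m f1" for d
  proof -
    obtain s where s: "d = cycle_of s" "generates m f1 s" using d unfolding Omega_def by auto
    define x where "x = win m s 0"
    have xl: "length x = m" unfolding x_def by simp
    define Ob where "Ob = orb ?F x"
    have dO: "Omega_k m d = Ob" unfolding Ob_def x_def using OkF[OF s(2)] s(1) by simp
    define C where "C = {y \<in> Omega m g1. (cl x, y) \<in> (D \<union> D\<inverse>)\<^sup>*}"
    have clx: "cl x \<in> Omega m g1" using cl_prop[OF xl] by simp
    have Cw: "C \<in> weak_components (Omega m g1) D"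
      unfolding weak_components_def C_def using clx by blast
    have OS: "Ob \<subseteq> ?S" unfolding Ob_def using P.orb_in xl by simp
    have sub1: "Ob \<subseteq> (\<Union>c \<in> C. Omega_k m c)"
    proof
      fix z assume z: "z \<in> Ob"
      then have zl: "length z = m" using OS by blast
      have "(cl x, cl z) \<in> (fs.EE TT \<union> (fs.EE TT)\<inverse>)\<^sup>*"
        using fs.easy_dir[of TT x z] z xl unfolding Ob_def by simp
      moreover have "fs.EE TT \<union> (fs.EE TT)\<inverse> \<subseteq> D \<union> D\<inverse>" using EED by blast
      ultimately have "(cl x, cl z) \<in> (D \<union> D\<inverse>)\<^sup>*" using rtrancl_mono by blast
      then have "cl z \<in> C" unfolding C_def using cl_prop[OF zl] by blast
      then show "z \<in> (\<Union>c \<in> C. Omega_k m c)" using cl_prop(2)[OF zl] by blast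
    qed
    have tau_in: "fs.tau TT y \<in> Ob" if y: "y \<in> Ob" for y
    proof (cases "y \<in> TT \<or> flip_first y \<in> TT")
      case True
      have yl: "length y = m" using y OS by blast
      have "flip_first y \<in> orb ?F y" using tauO[OF yl True] .
      then have "flip_first y \<in> Ob" using orb_subset[OF y[unfolded Ob_def]] unfolding Ob_def by blast
      then show ?thesis unfolding fs.tau_def using True by simp
    next
      case False then show ?thesis unfolding fs.tau_def using y by simp
    qed
    have G_in: "?G y \<in> Ob" if y: "y \<in> Ob" for y
    proof -
      have yS: "y \<in> ?S" using y OS by blast
      have "?F (fs.tau TT y) \<in> Ob" unfolding Ob_def by (rule orb_step[OF tau_in[OF y, unfolded Ob_def]])
      moreover have "?F (fs.tau TT y) = ?G y" unfolding fs.FT_def using fs.tau2[OF _ yS] by simp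
      ultimately show ?thesis by simp
    qed
    have orbG_in: "orb ?G y \<subseteq> Ob" if y: "y \<in> Ob" for y
    proof
      fix z assume "z \<in> orb ?G y"
      then show "z \<in> Ob" by (rule orb_induct[where Q="\<lambda>z. z \<in> Ob"]) (use y G_in in auto)
    qed
    have xO: "x \<in> Ob" unfolding Ob_def by (rule orb_self)
    have reach: "c \<in> Omega m g1 \<and> Omega_k m c \<subseteq> Ob" if "(cl x, c) \<in> (D \<union> D\<inverse>)\<^sup>*" for c
      using that
    proof (induction rule: rtrancl_induct)
      case base
      have "Omega_k m (cl x) = orb ?G x" using cyc_orb[OF clx cl_prop(2)[OF xl]] .
      then show ?case using clx orbG_in[OF xO] by simp
    next
      case (step c1 c2)
      show ?case
      proof (cases "(c1, c2) \<in> D")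
        case True
        then obtain v where v: "c2 \<in> Omega m g1" "v \<in> Omega_k m c1" "f3 (lbit (m - 1) v)" "lam v"
          "flip_first v \<in> Omega_k m c2" unfolding D_def by blast
        have vO: "v \<in> Ob" using step.IH v(2) by blast
        have vl: "length v = m" using vO OS by blast
        have "v \<in> TT" unfolding TT_def using vl v by simp
        then have "fs.tau TT v = flip_first v" unfolding fs.tau_def by simp
        then have "flip_first v \<in> Ob" using tau_in[OF vO] by simp
        moreover have "Omega_k m c2 = orb ?G (flip_first v)" using cyc_orb[OF v(1) v(5)] .
        ultimately show ?thesis using v(1) orbG_in by simp
      next
        case False
        then have "(c2, c1) \<in> D" using step.hyps(2) by blast
        then obtain v where v: "c2 \<in> Omega m g1" "v \<in> Omega_k m c2" "f3 (lbit (m - 1) v)" "lam v"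
          "flip_first v \<in> Omega_k m c1" unfolding D_def by blast
        have fO: "flip_first v \<in> Ob" using step.IH v(5) by blast
        have vl: "length v = m" using cyc_S[OF v(1,2)] .
        have vT: "v \<in> TT" unfolding TT_def using vl v by simp
        have "fs.tau TT (flip_first v) = v" unfolding fs.tau_def using vT flip2[OF ne[OF vl]] by simp
        then have "v \<in> Ob" using tau_in[OF fO] by simp
        moreover have "Omega_k m c2 = orb ?G v" using cyc_orb[OF v(1) v(2)] .
        ultimately show ?thesis using v(1) orbG_in by simp
      qed
    qed
    have sub2: "(\<Union>c \<in> C. Omega_k m c) \<subseteq> Ob"
    proof
      fix z assume "z \<in> (\<Union>c \<in> C. Omega_k m c)"
      then obtain c where c: "c \<in> C" "z \<in> Omega_k m c" by blast
      then have "Omega_k m c \<subseteq> Ob" using reach unfolding C_def by blast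
      then show "z \<in> Ob" using c by blast
    qed
    show ?thesis using Cw sub1 sub2 dO by blast
  qed
  have part2: "Omega k h \<subseteq> Omega m g1" if sub: "subFSR k h m f1" for k h
  proof
    fix d assume "d \<in> Omega k h"
    then obtain s where s: "d = cycle_of s" "generates k h s" "periodic_seq s" unfolding Omega_def by auto
    have k: "0 < k" "k < m" using sub unfolding subFSR_def by auto
    have gf: "generates m f1 s" using sub s(2) unfolding subFSR_def by blast
    have "win m s (Suc t) = ?G (win m s t)" for t
    proof -
      let ?y = "win m s t"
      have yl: "length ?y = m" by simp
      have e1: "win m s (Suc t) = ?F ?y"
      proof -
        have "win m s (Suc t) = state_trans f1 ?y" using gf unfolding gen_iff2[OF m_pos] by blast
        then show ?thesis using FF[OF yl] by simp
      qed
      have "\<not> (?y \<in> TT \<or> flip_first ?y \<in> TT)"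
      proof
        assume yT: "?y \<in> TT \<or> flip_first ?y \<in> TT"
        have "flip_first ?y \<in> orb ?F ?y" by (rule tauO[OF yl yT])
        moreover have "?y \<in> orb ?F (win m s 0)" unfolding orb_iff using winF[OF gf] by blast
        ultimately have "flip_first ?y \<in> orb ?F (win m s 0)" by (rule orb_trans[rotated])
        then have "flip_first ?y \<in> range (win m s)" using OkF[OF gf] Omega_k_cycle by simp
        then obtain j where j: "flip_first ?y = win m s j" by blast
        have fa: "s (t + m) = f1 ?y" using gf unfolding gen_iff by blast
        have fb: "s (j + m) = f1 (win m s j)" using gf unfolding gen_iff by blast
        have "f1 (flip_first ?y) = (\<not> f1 ?y)"
        proof -
          have fl: "length (flip_first ?y) = m" using flip_len[OF ne[OF yl]] yl by simp
          show ?thesis using f1_eq[OF fl] f1_eq[OF yl] g_flip[OF yl] lbf[OF yl] by simp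
        qed
        then have neq: "s (t + m) \<noteq> s (j + m)" using fa fb j by simp
        have hk: "s (u + (m - k) + k) = h (win k s (u + (m - k)))" for u
          using s(2) unfolding gen_iff by blast
        have dw: "win k s (u + (m - k)) = drop (m - k) (win m s u)" for u
          using drop_win[of "m - k" s u] k by simp
        have "drop (m - k) (win m s j) = drop (m - k) ?y"
          using j[symmetric] drop_flip[of "m - k" ?y] k by simp
        moreover have "s (t + (m - k) + k) = h (drop (m - k) ?y)" using hk[of t] dw[of t] by simp
        moreover have "s (j + (m - k) + k) = h (drop (m - k) (win m s j))" using hk[of j] dw[of j] by simp
        ultimately have "s (t + (m - k) + k) = s (j + (m - k) + k)" by simp
        then show False using neq k by simp
      qed
      then have "fs.tau TT ?y = ?y" unfolding fs.tau_def by simp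
      then show ?thesis using e1 unfolding fs.FT_def by simp
    qed
    then have "generates m g1 s" using gen_iff2[OF m_pos] by blast
    then show "d \<in> Omega m g1" unfolding Omega_def using s by blast
  qed
  show ?thesis using part1 part2 by blast
qed

end

theorem lemma7:
  fixes m :: nat and g1 f1 f3 lam :: "bool list \<Rightarrow> bool"
  assumes m_pos: "0 < m"
    and g_ns: "nonsingular m g1"
    and f_def: "\<forall>xs. length xs = m + 1 \<longrightarrow>
                  char_fun m f1 xs = (char_fun m g1 xs \<noteq> f3 (take (m - 1) (drop 1 xs)))"
    and cond_a: "\<forall>c \<in> Omega m g1. card {v \<in> Omega_k m c. lam v} \<le> 1"
    and cond_b: "\<forall>v. length v = m \<longrightarrow> \<not> (lam v \<and> lam (flip_first v))"
    and cond_c: "\<forall>u. length u = m - 1 \<and> f3 u \<longrightarrow> (\<exists>b. lam (b # u))"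
    and D_def: "D = {(c1, c2). c1 \<in> Omega m g1 \<and> c2 \<in> Omega m g1 \<and>
                   (\<exists>v \<in> Omega_k m c1. f3 (lbit (m - 1) v) \<and> lam v \<and>
                        flip_first v \<in> Omega_k m c2)}"
    and acyc: "acyclic D"
  shows "(\<forall>d \<in> Omega m f1. \<exists>C \<in> weak_components (Omega m g1) D.
            Omega_k m d = (\<Union>c \<in> C. Omega_k m c))
       \<and> (\<forall>k h. subFSR k h m f1 \<longrightarrow> Omega k h \<subseteq> Omega m g1)"
  by (rule main[OF assms])

end
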